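(* Let $S$ be a semidomain that is additively reduced, additively Furstenberg, and satisfies $\mathscr{A}_+(S)=S^\times$, and let $G$ be a torsion-free abelian group. Let $f=s_0x^{g_0}+s_1x^{g_1}+s_2x^{g_2}\in S[G]$ with $s_0,s_1,s_2\in S\setminus\{0\}$ and $g_0>g_1>g_2$ in $G$. If $s_0,s_1,s_2\in S^\times$ then $f$ is irreducible; otherwise $f$ is the sum of two irreducible elements of $S[G]$.
   Context: A semidomain is a subsemiring (containing $0$ and $1$) of an integral domain; $S^\times$ is the unit group of the multiplicative monoid $S\setminus\{0\}$. $S$ is additively reduced if $0$ is the only invertible element of $(S,+)$. An additive atom is a nonzero $a\in S$ with $a=b+c$ implying $b=0$ or $c=0$; $\mathscr{A}_+(S)$ is the set of additive atoms. $S$ is additively Furstenberg if every nonzero $s\in S$ equals $a+t$ with $a\in\mathscr{A}_+(S)$, $t\in S$. $G$ carries a fixed total order compatible with addition. $S[G]$ is the semidomain of formal finite sums $\sum_{g\in G}s_gx^g$ with polynomial operations. $f\in S[G]$ is irreducible if it is nonzero, a nonunit, and $f=pq$ implies $p$ or $q$ is a unit of $S[G]$. *)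

theory Defs
  imports Main "HOL-Library.Poly_Mapping"
begin

definition semidomain :: "'a::idom set \<Rightarrow> bool" where
  "semidomain S \<longleftrightarrow> 0 \<in> S \<and> 1 \<in> S \<and>
     (\<forall>a\<in>S. \<forall>b\<in>S. a + b \<in> S) \<and> (\<forall>a\<in>S. \<forall>b\<in>S. a * b \<in> S)"

definition sunits :: "'a::idom set \<Rightarrow> 'a set" where
  "sunits S = {u \<in> S - {0}. \<exists>v\<in>S - {0}. u * v = 1}"

definition add_reduced :: "'a::idom set \<Rightarrow> bool" where
  "add_reduced S \<longleftrightarrow> (\<forall>a\<in>S. (\<exists>b\<in>S. a + b = 0) \<longrightarrow> a = 0)"

definition add_atoms :: "'a::idom set \<Rightarrow> 'a set" where
  "add_atoms S = {a \<in> S. a \<noteq> 0 \<and>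
      (\<forall>b\<in>S. \<forall>c\<in>S. a = b + c \<longrightarrow> b = 0 \<or> c = 0)}"

definition add_furstenberg :: "'a::idom set \<Rightarrow> bool" where
  "add_furstenberg S \<longleftrightarrow>
     (\<forall>s\<in>S. s \<noteq> 0 \<longrightarrow> (\<exists>a\<in>add_atoms S. \<exists>t\<in>S. s = a + t))"

(* S[G]: finitely supported functions G -> S, with the convolution product
   (the multiplication of the poly_mapping type). *)
definition monoid_sr :: "'a::idom set \<Rightarrow> ('g::comm_monoid_add \<Rightarrow>\<^sub>0 'a) set" where
  "monoid_sr S = {p. \<forall>g. Poly_Mapping.lookup p g \<in> S}"

definition unit_sr :: "'a::idom set \<Rightarrow> ('g::comm_monoid_add \<Rightarrow>\<^sub>0 'a) \<Rightarrow> bool" where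
  "unit_sr S u \<longleftrightarrow> u \<in> monoid_sr S \<and> (\<exists>v\<in>monoid_sr S. u * v = 1)"

definition irreducible_sr :: "'a::idom set \<Rightarrow> ('g::comm_monoid_add \<Rightarrow>\<^sub>0 'a) \<Rightarrow> bool" where
  "irreducible_sr S f \<longleftrightarrow> f \<in> monoid_sr S \<and> f \<noteq> 0 \<and> \<not> unit_sr S f \<and>
     (\<forall>p\<in>monoid_sr S. \<forall>q\<in>monoid_sr S. f = p * q \<longrightarrow> unit_sr S p \<or> unit_sr S q)"

end

theory Submission imports Defs begin

lemma sum_in_S:
  assumes "semidomain S" "finite I" "\<forall>i\<in>I. h i \<in> S"
  shows "sum h I \<in> S"
  using assms(2,3)
proof (induction I rule: finite_induct)
  case empty then show ?case using assms(1) by (simp add: semidomain_def)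
next
  case (insert x F) then show ?case using assms(1) by (simp add: semidomain_def)
qed

lemma sum_nz_S:
  assumes "semidomain S" "add_reduced S" "finite I" "\<forall>i\<in>I. h i \<in> S" "i \<in> I" "h i \<noteq> 0"
  shows "sum h I \<noteq> 0"
proof
  assume "sum h I = 0"
  moreover have "sum h I = h i + sum h (I - {i})"
    using assms(3,5) by (simp add: sum.remove)
  moreover have "sum h (I - {i}) \<in> S" by (rule sum_in_S[OF assms(1)]) (use assms(3,4) in auto)
  ultimately have "h i = 0" using assms(2,4,5) unfolding add_reduced_def by metis
  with assms(6) show False by simp
qed

lemma lookup_mult_grp:
  fixes p q :: "'g::ab_group_add \<Rightarrow>\<^sub>0 'a::comm_semiring_0"
  shows "Poly_Mapping.lookup (p * q) k = (\<Sum>l\<in>Poly_Mapping.keys p. Poly_Mapping.lookup p l * Poly_Mapping.lookup q (k - l))"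
proof -
  have inner: "(\<Sum>r. Poly_Mapping.lookup q r when k = l + r) = Poly_Mapping.lookup q (k - l)" for l
  proof -
    have "(\<lambda>r. Poly_Mapping.lookup q r when k = l + r) = (\<lambda>r. if r = k - l then Poly_Mapping.lookup q r else 0)"
      by (auto simp: fun_eq_iff when_def algebra_simps)
    then show ?thesis by (simp only:) (rule Sum_any.delta)
  qed
  have "Poly_Mapping.lookup (p * q) k = (\<Sum>l. Poly_Mapping.lookup p l * Poly_Mapping.lookup q (k - l))"
    by (simp add: lookup_mult inner)
  also have "\<dots> = (\<Sum>l\<in>Poly_Mapping.keys p. Poly_Mapping.lookup p l * Poly_Mapping.lookup q (k - l))"
    by (rule Sum_any.expand_superset) (auto simp: in_keys_iff)
  finally show ?thesis .
qed

lemma in_monoid_sr: "p \<in> monoid_sr S \<Longrightarrow> Poly_Mapping.lookup p g \<in> S"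
  by (simp add: monoid_sr_def)

lemma mult_keys_iff:
  fixes p q :: "'g::ab_group_add \<Rightarrow>\<^sub>0 'a::idom"
  assumes "semidomain S" "add_reduced S" "p \<in> monoid_sr S" "q \<in> monoid_sr S"
  shows "k \<in> Poly_Mapping.keys (p * q) \<longleftrightarrow> (\<exists>l\<in>Poly_Mapping.keys p. k - l \<in> Poly_Mapping.keys q)"
proof
  assume "k \<in> Poly_Mapping.keys (p * q)"
  then have "(\<Sum>l\<in>Poly_Mapping.keys p. Poly_Mapping.lookup p l * Poly_Mapping.lookup q (k - l)) \<noteq> 0"
    by (simp add: in_keys_iff lookup_mult_grp)
  then obtain l where "l \<in> Poly_Mapping.keys p" "Poly_Mapping.lookup p l * Poly_Mapping.lookup q (k - l) \<noteq> 0"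
    using sum.not_neutral_contains_not_neutral by blast
  then show "\<exists>l\<in>Poly_Mapping.keys p. k - l \<in> Poly_Mapping.keys q" by (auto simp: in_keys_iff)
next
  assume "\<exists>l\<in>Poly_Mapping.keys p. k - l \<in> Poly_Mapping.keys q"
  then obtain l where l: "l \<in> Poly_Mapping.keys p" "k - l \<in> Poly_Mapping.keys q" by blast
  have "(\<Sum>l\<in>Poly_Mapping.keys p. Poly_Mapping.lookup p l * Poly_Mapping.lookup q (k - l)) \<noteq> 0"
    apply (rule sum_nz_S[OF assms(1,2) finite_keys _ l(1)])
    using assms(1,3,4) l by (auto simp: semidomain_def in_monoid_sr in_keys_iff)
  then show "k \<in> Poly_Mapping.keys (p * q)" by (simp add: in_keys_iff lookup_mult_grp)
qed

lemma single_mult_lookup: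
  fixes q :: "'g::ab_group_add \<Rightarrow>\<^sub>0 'a::comm_semiring_0"
  shows "Poly_Mapping.lookup (Poly_Mapping.single h a * q) k = a * Poly_Mapping.lookup q (k - h)"
  by (simp add: lookup_mult_grp)

lemma single_in_monoid_sr: "semidomain S \<Longrightarrow> a \<in> S \<Longrightarrow> Poly_Mapping.single h a \<in> monoid_sr S"
  by (auto simp: monoid_sr_def lookup_single when_def semidomain_def)

lemma singleton_keys:
  fixes A :: "'g::linorder set"
  assumes "finite A" "A \<noteq> {}" "\<not> Min A < Max A"
  shows "A = {Min A}"
proof -
  have "Min A \<le> Max A" using Max_ge[OF assms(1) Min_in[OF assms(1,2)]] .
  then have "Min A = Max A" using assms(3) by simp
  have "x = Min A" if "x \<in> A" for x
    using Min_le[OF assms(1) that] Max_ge[OF assms(1) that] \<open>Min A = Max A\<close> by simp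
  then show ?thesis using Min_in[OF assms(1,2)] by blast
qed

lemma monomial_unit:
  fixes p q :: "'g::ab_group_add \<Rightarrow>\<^sub>0 'a::idom"
  assumes sd: "semidomain S" and p: "p \<in> monoid_sr S" and q: "q \<in> monoid_sr S"
    and kp: "Poly_Mapping.keys p = {h}" and u: "Poly_Mapping.lookup (p * q) c \<in> sunits S"
  shows "unit_sr S p"
proof -
  define a where "a = Poly_Mapping.lookup p h"
  have pa: "p = Poly_Mapping.single h a"
  proof (rule poly_mapping_eqI)
    fix k show "Poly_Mapping.lookup p k = Poly_Mapping.lookup (Poly_Mapping.single h a) k"
    proof (cases "k = h")
      case False
      then have "k \<notin> Poly_Mapping.keys p" using kp by simp
      then show ?thesis using False by (simp add: in_keys_iff lookup_single_not_eq)
    qed (simp add: a_def)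
  qed
  have "Poly_Mapping.lookup (p * q) c = a * Poly_Mapping.lookup q (c - h)"
    by (simp add: pa single_mult_lookup)
  with u obtain v where v: "v \<in> S" "a * Poly_Mapping.lookup q (c - h) * v = 1"
    unfolding sunits_def by auto
  define w where "w = Poly_Mapping.lookup q (c - h) * v"
  have w: "w \<in> S" using sd v q unfolding w_def semidomain_def by (simp add: in_monoid_sr)
  have aw: "a * w = 1" using v by (simp add: w_def mult.assoc)
  have "p * Poly_Mapping.single (- h) w = 1"
    by (simp add: pa mult_single aw)
  moreover have "Poly_Mapping.single (- h) w \<in> monoid_sr S" using single_in_monoid_sr[OF sd w] .
  ultimately show ?thesis using p unfolding unit_sr_def by blast
qed

lemma four_points:
  fixes p q :: "'g::linordered_ab_group_add \<Rightarrow>\<^sub>0 'a::idom"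
  assumes "semidomain S" "add_reduced S" "p \<in> monoid_sr S" "q \<in> monoid_sr S"
    and "Poly_Mapping.keys p \<noteq> {}" "Poly_Mapping.keys q \<noteq> {}"
  shows "Min (Poly_Mapping.keys p) + Min (Poly_Mapping.keys q) \<in> Poly_Mapping.keys (p * q)"
    "Min (Poly_Mapping.keys p) + Max (Poly_Mapping.keys q) \<in> Poly_Mapping.keys (p * q)"
    "Max (Poly_Mapping.keys p) + Min (Poly_Mapping.keys q) \<in> Poly_Mapping.keys (p * q)"
    "Max (Poly_Mapping.keys p) + Max (Poly_Mapping.keys q) \<in> Poly_Mapping.keys (p * q)"
proof -
  have mi: "Min (Poly_Mapping.keys p) \<in> Poly_Mapping.keys p" "Max (Poly_Mapping.keys p) \<in> Poly_Mapping.keys p"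
    "Min (Poly_Mapping.keys q) \<in> Poly_Mapping.keys q" "Max (Poly_Mapping.keys q) \<in> Poly_Mapping.keys q"
    using assms(5,6) by (simp_all add: Min_in Max_in)
  have *: "l \<in> Poly_Mapping.keys p \<Longrightarrow> r \<in> Poly_Mapping.keys q \<Longrightarrow> l + r \<in> Poly_Mapping.keys (p * q)" for l r
    unfolding mult_keys_iff[OF assms(1-4)] by (intro bexI[of _ l]) simp_all
  show "Min (Poly_Mapping.keys p) + Min (Poly_Mapping.keys q) \<in> Poly_Mapping.keys (p * q)"
    "Min (Poly_Mapping.keys p) + Max (Poly_Mapping.keys q) \<in> Poly_Mapping.keys (p * q)"
    "Max (Poly_Mapping.keys p) + Min (Poly_Mapping.keys q) \<in> Poly_Mapping.keys (p * q)"
    "Max (Poly_Mapping.keys p) + Max (Poly_Mapping.keys q) \<in> Poly_Mapping.keys (p * q)"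
    by (intro * mi)+
qed

lemma irr_crit:
  fixes f :: "'g::linordered_ab_group_add \<Rightarrow>\<^sub>0 'a::idom"
  assumes sd: "semidomain S" and ar: "add_reduced S" and f: "f \<in> monoid_sr S"
    and ne: "Poly_Mapping.keys f \<noteq> {}"
    and mm: "Min (Poly_Mapping.keys f) < Max (Poly_Mapping.keys f)"
    and u: "Poly_Mapping.lookup f c \<in> sunits S"
    and nb: "\<And>p q. p \<in> monoid_sr S \<Longrightarrow> q \<in> monoid_sr S \<Longrightarrow> f = p * q \<Longrightarrow>
       Min (Poly_Mapping.keys p) < Max (Poly_Mapping.keys p) \<Longrightarrow>
       Min (Poly_Mapping.keys q) < Max (Poly_Mapping.keys q) \<Longrightarrow> False"
  shows "irreducible_sr S f"
  unfolding irreducible_sr_def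
proof (intro conjI ballI impI)
  show "f \<in> monoid_sr S" by fact
  show f0: "f \<noteq> 0" using ne by auto
  show "\<not> unit_sr S f"
  proof
    assume "unit_sr S f"
    then obtain v where v: "v \<in> monoid_sr S" "f * v = 1" unfolding unit_sr_def by blast
    have "v \<noteq> 0" using v by auto
    then have kv: "Poly_Mapping.keys v \<noteq> {}" by simp
    have k1: "Poly_Mapping.keys (f * v) = {0}" using v(2) by simp
    have "Min (Poly_Mapping.keys f) + Max (Poly_Mapping.keys v) \<in> {0}"
      using four_points(2)[OF sd ar f v(1) ne kv] k1 by blast
    moreover have "Max (Poly_Mapping.keys f) + Max (Poly_Mapping.keys v) \<in> {0}"
      using four_points(4)[OF sd ar f v(1) ne kv] k1 by blast
    ultimately have "Min (Poly_Mapping.keys f) + Max (Poly_Mapping.keys v) = Max (Poly_Mapping.keys f) + Max (Poly_Mapping.keys v)"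
      by (simp only: singleton_iff)
    then have "Min (Poly_Mapping.keys f) = Max (Poly_Mapping.keys f)" by (rule add_right_imp_eq)
    then show False using mm by simp
  qed
  fix p q assume p: "p \<in> monoid_sr S" and q: "q \<in> monoid_sr S" and fpq: "f = p * q"
  have "p \<noteq> 0" "q \<noteq> 0" using f0 fpq by auto
  then have kp: "Poly_Mapping.keys p \<noteq> {}" and kq: "Poly_Mapping.keys q \<noteq> {}" by auto
  show "unit_sr S p \<or> unit_sr S q"
  proof (cases "Min (Poly_Mapping.keys p) < Max (Poly_Mapping.keys p)")
    case True
    show ?thesis
    proof (cases "Min (Poly_Mapping.keys q) < Max (Poly_Mapping.keys q)")
      case True2: True
      then show ?thesis using nb[OF p q fpq True] by blast
    next
      case False
      have "Poly_Mapping.keys q = {Min (Poly_Mapping.keys q)}"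
        using singleton_keys[OF finite_keys kq False] .
      moreover have "Poly_Mapping.lookup (q * p) c \<in> sunits S"
        using u unfolding fpq mult.commute[of p q] .
      ultimately have "unit_sr S q" by (rule monomial_unit[OF sd q p])
      then show ?thesis by blast
    qed
  next
    case False
    have "Poly_Mapping.keys p = {Min (Poly_Mapping.keys p)}"
      using singleton_keys[OF finite_keys kp False] .
    moreover have "Poly_Mapping.lookup (p * q) c \<in> sunits S" using u unfolding fpq .
    ultimately have "unit_sr S p" by (rule monomial_unit[OF sd p q])
    then show ?thesis by blast
  qed
qed

lemma two_elems:
  fixes A :: "'g::linorder set"
  assumes "finite A" "x \<in> A" "y \<in> A" "x \<noteq> y"
  shows "Min A < Max A"
proof -
  have "Min A \<le> x" "Min A \<le> y" "x \<le> Max A" "y \<le> Max A"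
    using assms by (simp_all add: Min_le Max_ge)
  show ?thesis
  proof (rule ccontr)
    assume "\<not> Min A < Max A"
    then have m: "Max A \<le> Min A" by simp
    have "x = Min A" using \<open>x \<le> Max A\<close> \<open>Min A \<le> x\<close> m by simp
    moreover have "y = Min A" using \<open>y \<le> Max A\<close> \<open>Min A \<le> y\<close> m by simp
    ultimately show False using assms(4) by simp
  qed
qed

lemma tri_lookup:
  "Poly_Mapping.lookup (Poly_Mapping.single x a + Poly_Mapping.single y b + Poly_Mapping.single z c) k =
   (if k = x then a else 0) + (if k = y then b else 0) + (if k = z then c else 0)"
  by (simp add: lookup_add lookup_single when_def eq_commute)

lemma tri_in_monoid_sr:
  assumes "semidomain S" "a \<in> S" "b \<in> S" "c \<in> S"
  shows "Poly_Mapping.single x a + Poly_Mapping.single y b + Poly_Mapping.single z c \<in> monoid_sr S"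
  using assms unfolding monoid_sr_def semidomain_def by (simp add: tri_lookup)

lemma bi_in_monoid_sr:
  assumes "semidomain S" "a \<in> S" "b \<in> S"
  shows "Poly_Mapping.single x a + Poly_Mapping.single y b \<in> monoid_sr S"
  using assms unfolding monoid_sr_def semidomain_def by (simp add: lookup_add lookup_single when_def)

lemma tri_keys:
  fixes x y z :: "'g::linorder"
  assumes "a \<noteq> 0" "b \<noteq> 0" "c \<noteq> 0" "z < y" "y < x"
  shows "Poly_Mapping.keys (Poly_Mapping.single x a + Poly_Mapping.single y b + Poly_Mapping.single z c) = {x, y, z}"
  using assms unfolding set_eq_iff in_keys_iff tri_lookup by auto

lemma bi_keys:
  fixes x y :: "'g::linorder"
  assumes "a \<noteq> 0" "b \<noteq> 0" "y < x"
  shows "Poly_Mapping.keys (Poly_Mapping.single x a + Poly_Mapping.single y b) = {x, y}"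
  using assms unfolding set_eq_iff in_keys_iff by (auto simp: lookup_add lookup_single when_def)

lemma between3:
  fixes x y z P1 P2 P4 :: "'g::linorder"
  assumes "z < y" "y < x" "P1 \<in> {x,y,z}" "P2 \<in> {x,y,z}" "P4 \<in> {x,y,z}" "P1 < P2" "P2 < P4"
  shows "P2 = y"
  using assms by auto

lemma between2:
  fixes x y P1 P2 P4 :: "'g::linorder"
  assumes "P1 \<in> {x,y}" "P2 \<in> {x,y}" "P4 \<in> {x,y}" "P1 < P2" "P2 < P4"
  shows False
  using assms by auto

lemma tri_irr:
  fixes x y z :: "'g::linordered_ab_group_add" and a b c :: "'a::idom"
  assumes sd: "semidomain S" and ar: "add_reduced S"
    and a: "a \<in> S - {0}" and b: "b \<in> S - {0}" and c: "c \<in> S - {0}"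
    and bu: "b \<in> sunits S" and batom: "b \<in> add_atoms S"
    and zy: "z < y" and yx: "y < x"
  shows "irreducible_sr S (Poly_Mapping.single x a + Poly_Mapping.single y b + Poly_Mapping.single z c)"
    (is "irreducible_sr S ?f")
proof -
  have fS: "?f \<in> monoid_sr S" by (rule tri_in_monoid_sr[OF sd]) (use a b c in auto)
  have kf: "Poly_Mapping.keys ?f = {x, y, z}" using tri_keys[OF _ _ _ zy yx, of a b c] a b c by simp
  have ly: "Poly_Mapping.lookup ?f y = b" using zy yx by (auto simp: tri_lookup)
  show ?thesis
  proof (rule irr_crit[OF sd ar fS])
    show "Poly_Mapping.keys ?f \<noteq> {}" using kf by simp
    show "Min (Poly_Mapping.keys ?f) < Max (Poly_Mapping.keys ?f)"
      using two_elems[OF finite_keys, of x ?f y] kf yx by simp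
    show "Poly_Mapping.lookup ?f y \<in> sunits S" using ly bu by simp
  next
    fix p q
    assume p: "p \<in> monoid_sr S" and q: "q \<in> monoid_sr S" and fpq: "?f = p * q"
      and mp: "Min (Poly_Mapping.keys p) < Max (Poly_Mapping.keys p)"
      and mq: "Min (Poly_Mapping.keys q) < Max (Poly_Mapping.keys q)"
    define lp where "lp = Min (Poly_Mapping.keys p)"
    define hp where "hp = Max (Poly_Mapping.keys p)"
    define lq where "lq = Min (Poly_Mapping.keys q)"
    define hq where "hq = Max (Poly_Mapping.keys q)"
    have "?f \<noteq> 0" using kf by auto
    then have "p \<noteq> 0" "q \<noteq> 0" using fpq by auto
    then have kp: "Poly_Mapping.keys p \<noteq> {}" and kq: "Poly_Mapping.keys q \<noteq> {}" by auto
    note fp = four_points[OF sd ar p q kp kq, folded lp_def hp_def lq_def hq_def, folded fpq, unfolded kf]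
    have lphp: "lp < hp" and lqhq: "lq < hq" using mp mq by (simp_all add: lp_def hp_def lq_def hq_def)
    have o1: "lp + lq < lp + hq" "lp + hq < hp + hq" "lp + lq < hp + lq" "hp + lq < hp + hq"
      using lphp lqhq by simp_all
    have e1: "lp + hq = y" by (rule between3[OF zy yx fp(1) fp(2) fp(4) o1(1) o1(2)])
    have e2: "hp + lq = y" by (rule between3[OF zy yx fp(1) fp(3) fp(4) o1(3) o1(4)])
    have inp: "lp \<in> Poly_Mapping.keys p" "hp \<in> Poly_Mapping.keys p"
      using kp by (simp_all add: lp_def hp_def)
    have inq: "lq \<in> Poly_Mapping.keys q" "hq \<in> Poly_Mapping.keys q"
      using kq by (simp_all add: lq_def hq_def)
    have d1: "y - lp = hq" using e1 by (simp add: algebra_simps)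
    have d2: "y - hp = lq" using e2 by (simp add: algebra_simps)
    define t where "t = (\<lambda>l. Poly_Mapping.lookup p l * Poly_Mapping.lookup q (y - l))"
    have tS: "\<forall>l\<in>Poly_Mapping.keys p - {lp}. t l \<in> S"
      using sd p q unfolding t_def semidomain_def by (simp add: in_monoid_sr)
    have "b = Poly_Mapping.lookup (p * q) y" using ly fpq by simp
    also have "\<dots> = sum t (Poly_Mapping.keys p)" by (simp add: lookup_mult_grp t_def)
    also have "\<dots> = t lp + sum t (Poly_Mapping.keys p - {lp})"
      using inp(1) by (simp add: sum.remove)
    finally have bsum: "b = t lp + sum t (Poly_Mapping.keys p - {lp})" .
    have A: "t lp \<in> S" "t lp \<noteq> 0"
      using sd p q inp(1) inq(2) unfolding t_def semidomain_def by (simp_all add: in_monoid_sr d1 in_keys_iff)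
    have B1: "sum t (Poly_Mapping.keys p - {lp}) \<in> S"
      by (rule sum_in_S[OF sd]) (use tS in auto)
    have hpin: "hp \<in> Poly_Mapping.keys p - {lp}" using inp(2) lphp by simp
    have "t hp \<noteq> 0" using inp(2) inq(1) unfolding t_def by (simp add: d2 in_keys_iff)
    then have B2: "sum t (Poly_Mapping.keys p - {lp}) \<noteq> 0"
      using sum_nz_S[OF sd ar _ tS hpin] by simp
    show False using batom bsum A B1 B2 unfolding add_atoms_def by blast
  qed
qed

lemma bi_irr:
  fixes x y :: "'g::linordered_ab_group_add" and a b :: "'a::idom"
  assumes sd: "semidomain S" and ar: "add_reduced S"
    and a: "a \<in> S - {0}" and b: "b \<in> S - {0}"
    and u: "a \<in> sunits S \<or> b \<in> sunits S" and yx: "y < x"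
  shows "irreducible_sr S (Poly_Mapping.single x a + Poly_Mapping.single y b)"
    (is "irreducible_sr S ?f")
proof -
  have fS: "?f \<in> monoid_sr S" by (rule bi_in_monoid_sr[OF sd]) (use a b in auto)
  have kf: "Poly_Mapping.keys ?f = {x, y}" using bi_keys[OF _ _ yx, of a b] a b by simp
  have lx: "Poly_Mapping.lookup ?f x = a" and ly: "Poly_Mapping.lookup ?f y = b"
    using yx by (auto simp: lookup_add lookup_single when_def)
  obtain c where cu: "Poly_Mapping.lookup ?f c \<in> sunits S" using u lx ly by metis
  show ?thesis
  proof (rule irr_crit[OF sd ar fS _ _ cu])
    show "Poly_Mapping.keys ?f \<noteq> {}" using kf by simp
    show "Min (Poly_Mapping.keys ?f) < Max (Poly_Mapping.keys ?f)"
      using two_elems[OF finite_keys, of x ?f y] kf yx by simp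
  next
    fix p q
    assume p: "p \<in> monoid_sr S" and q: "q \<in> monoid_sr S" and fpq: "?f = p * q"
      and mp: "Min (Poly_Mapping.keys p) < Max (Poly_Mapping.keys p)"
      and mq: "Min (Poly_Mapping.keys q) < Max (Poly_Mapping.keys q)"
    define lp where "lp = Min (Poly_Mapping.keys p)"
    define hp where "hp = Max (Poly_Mapping.keys p)"
    define lq where "lq = Min (Poly_Mapping.keys q)"
    define hq where "hq = Max (Poly_Mapping.keys q)"
    have "?f \<noteq> 0" using kf by auto
    then have "p \<noteq> 0" "q \<noteq> 0" using fpq by auto
    then have kp: "Poly_Mapping.keys p \<noteq> {}" and kq: "Poly_Mapping.keys q \<noteq> {}" by auto
    note fp = four_points[OF sd ar p q kp kq, folded lp_def hp_def lq_def hq_def, folded fpq, unfolded kf]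
    have lphp: "lp < hp" and lqhq: "lq < hq" using mp mq by (simp_all add: lp_def hp_def lq_def hq_def)
    have o1: "lp + lq < lp + hq" "lp + hq < hp + hq"
      using lphp lqhq by simp_all
    show False by (rule between2[OF fp(1) fp(2) fp(4) o1])
  qed
qed

lemma furst_split:
  assumes "add_furstenberg S" "add_atoms S = sunits S" "s \<in> S - {0}" "s \<notin> sunits S"
  shows "\<exists>u t. u \<in> sunits S \<and> t \<in> S - {0} \<and> s = u + t"
proof -
  obtain u t where u: "u \<in> add_atoms S" and t: "t \<in> S" and st: "s = u + t"
    using assms(1,3) unfolding add_furstenberg_def by blast
  have uu: "u \<in> sunits S" using u assms(2) by simp
  have "t \<noteq> 0" using st uu assms(4) by auto
  then show ?thesis using uu t st by blast
qed

lemma sunits_S: "u \<in> sunits S \<Longrightarrow> u \<in> S - {0}"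
  by (simp add: sunits_def)

theorem lemma3p5:
  fixes S :: "'a::idom set"
    and s0 s1 s2 :: 'a
    and g0 g1 g2 :: "'g::linordered_ab_group_add"
  assumes "semidomain S" and "add_reduced S" and "add_furstenberg S"
    and "add_atoms S = sunits S"
    and "s0 \<in> S - {0}" and "s1 \<in> S - {0}" and "s2 \<in> S - {0}"
    and "g1 < g0" and "g2 < g1"
  shows "(s0 \<in> sunits S \<and> s1 \<in> sunits S \<and> s2 \<in> sunits S \<longrightarrow>
            irreducible_sr S (Poly_Mapping.single g0 s0 + Poly_Mapping.single g1 s1
                              + Poly_Mapping.single g2 s2))
       \<and> (\<not> (s0 \<in> sunits S \<and> s1 \<in> sunits S \<and> s2 \<in> sunits S) \<longrightarrow>
            (\<exists>p q. irreducible_sr S p \<and> irreducible_sr S q \<and>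
               Poly_Mapping.single g0 s0 + Poly_Mapping.single g1 s1
                 + Poly_Mapping.single g2 s2 = p + q))"
proof (intro conjI impI)
  note sd = assms(1) and ar = assms(2) and fu = assms(3) and at = assms(4)
  note s = assms(5-7) and g = assms(8,9)
  have g02: "g2 < g0" using g by simp
  show "irreducible_sr S (Poly_Mapping.single g0 s0 + Poly_Mapping.single g1 s1 + Poly_Mapping.single g2 s2)"
    if "s0 \<in> sunits S \<and> s1 \<in> sunits S \<and> s2 \<in> sunits S"
    using tri_irr[OF sd ar s _ _ g(2) g(1)] that at by simp
  assume nu: "\<not> (s0 \<in> sunits S \<and> s1 \<in> sunits S \<and> s2 \<in> sunits S)"
  show "\<exists>p q. irreducible_sr S p \<and> irreducible_sr S q \<and>
           Poly_Mapping.single g0 s0 + Poly_Mapping.single g1 s1 + Poly_Mapping.single g2 s2 = p + q"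
  proof (cases "s1 \<in> sunits S")
    case False
    then obtain u1 t1 where u1: "u1 \<in> sunits S" and t1: "t1 \<in> S - {0}" and e1: "s1 = u1 + t1"
      using furst_split[OF fu at s(2)] by blast
    show ?thesis
    proof (cases "s0 \<in> sunits S")
      case True
      have "irreducible_sr S (Poly_Mapping.single g0 s0 + Poly_Mapping.single g1 t1)"
        by (rule bi_irr[OF sd ar s(1) t1 _ g(1)]) (use True in simp)
      moreover have "irreducible_sr S (Poly_Mapping.single g1 u1 + Poly_Mapping.single g2 s2)"
        by (rule bi_irr[OF sd ar sunits_S[OF u1] s(3) _ g(2)]) (use u1 in simp)
      moreover have "Poly_Mapping.single g0 s0 + Poly_Mapping.single g1 s1 + Poly_Mapping.single g2 s2
          = (Poly_Mapping.single g0 s0 + Poly_Mapping.single g1 t1) + (Poly_Mapping.single g1 u1 + Poly_Mapping.single g2 s2)"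
        unfolding e1 single_add by (simp add: ac_simps)
      ultimately show ?thesis by blast
    next
      case False
      then obtain u0 t0 where u0: "u0 \<in> sunits S" and t0: "t0 \<in> S - {0}" and e0: "s0 = u0 + t0"
        using furst_split[OF fu at s(1)] by blast
      have "irreducible_sr S (Poly_Mapping.single g0 t0 + Poly_Mapping.single g1 u1 + Poly_Mapping.single g2 s2)"
        by (rule tri_irr[OF sd ar t0 sunits_S[OF u1] s(3) u1 _ g(2) g(1)]) (use u1 at in simp)
      moreover have "irreducible_sr S (Poly_Mapping.single g0 u0 + Poly_Mapping.single g1 t1)"
        by (rule bi_irr[OF sd ar sunits_S[OF u0] t1 _ g(1)]) (use u0 in simp)
      moreover have "Poly_Mapping.single g0 s0 + Poly_Mapping.single g1 s1 + Poly_Mapping.single g2 s2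
          = (Poly_Mapping.single g0 t0 + Poly_Mapping.single g1 u1 + Poly_Mapping.single g2 s2) + (Poly_Mapping.single g0 u0 + Poly_Mapping.single g1 t1)"
        unfolding e1 e0 single_add by (simp add: ac_simps)
      ultimately show ?thesis by blast
    qed
  next
    case s1u: True
    show ?thesis
    proof (cases "s0 \<in> sunits S")
      case False
      then obtain u0 t0 where u0: "u0 \<in> sunits S" and t0: "t0 \<in> S - {0}" and e0: "s0 = u0 + t0"
        using furst_split[OF fu at s(1)] by blast
      have "irreducible_sr S (Poly_Mapping.single g0 t0 + Poly_Mapping.single g1 s1)"
        by (rule bi_irr[OF sd ar t0 s(2) _ g(1)]) (use s1u in simp)
      moreover have "irreducible_sr S (Poly_Mapping.single g0 u0 + Poly_Mapping.single g2 s2)"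
        by (rule bi_irr[OF sd ar sunits_S[OF u0] s(3) _ g02]) (use u0 in simp)
      moreover have "Poly_Mapping.single g0 s0 + Poly_Mapping.single g1 s1 + Poly_Mapping.single g2 s2
          = (Poly_Mapping.single g0 t0 + Poly_Mapping.single g1 s1) + (Poly_Mapping.single g0 u0 + Poly_Mapping.single g2 s2)"
        unfolding e0 single_add by (simp add: ac_simps)
      ultimately show ?thesis by blast
    next
      case True
      then have "s2 \<notin> sunits S" using nu s1u by blast
      then obtain u2 t2 where u2: "u2 \<in> sunits S" and t2: "t2 \<in> S - {0}" and e2: "s2 = u2 + t2"
        using furst_split[OF fu at s(3)] by blast
      have "irreducible_sr S (Poly_Mapping.single g0 s0 + Poly_Mapping.single g2 u2)"
        by (rule bi_irr[OF sd ar s(1) sunits_S[OF u2] _ g02]) (use True in simp)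
      moreover have "irreducible_sr S (Poly_Mapping.single g1 s1 + Poly_Mapping.single g2 t2)"
        by (rule bi_irr[OF sd ar s(2) t2 _ g(2)]) (use s1u in simp)
      moreover have "Poly_Mapping.single g0 s0 + Poly_Mapping.single g1 s1 + Poly_Mapping.single g2 s2
          = (Poly_Mapping.single g0 s0 + Poly_Mapping.single g2 u2) + (Poly_Mapping.single g1 s1 + Poly_Mapping.single g2 t2)"
        unfolding e2 single_add by (simp add: ac_simps)
      ultimately show ?thesis by blast
    qed
  qed
qed

end
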